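(* Let $f:X\to Y$ be a continuous map between sober topological spaces, and let $f^{\#}:C(Y)\to C(X)$, $W\mapsto f^{-1}(W)$. The following are equivalent: (1) $f$ is an epimorphism in the category $\mathbf{Sob}$ of sober spaces and continuous maps; (2) $f^{\#}$ is injective; (3) $f^{\#}$ is a monomorphism in the category of complete idealic semirings; (4) for every closed subset $z$ of $Y$, the set $f(X)\cap z$ is dense in $z$.
   Context: A topological space is sober if every irreducible closed subset has a unique generic point. An idealic semiring is a set with two commutative associative operations $+,\cdot$ with units $0,1$, where $+$ is idempotent, $\cdot$ distributes over $+$, $0$ is absorbing for $\cdot$ and $1$ is absorbing for $+$; it is complete if arbitrary (infinite) sums exist and multiplication distributes over them, and morphisms of complete idealic semirings preserve $0,1$, products and arbitrary sums. For a sober space $X$, $C(X)$ is the set of closed subsets with $Z+W=Z\cap W$ (arbitrary sums being intersections), $Z\cdot W=Z\cup W$, $0=X$, $1=\emptyset$; this is a complete idealic semiring with idempotent multiplication, and $f^{\#}$ is a morphism of such. *)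

theory Defs
  imports "HOL-Analysis.Analysis"
begin

definition irreducible_closed :: "'a topology \<Rightarrow> 'a set \<Rightarrow> bool" where
  "irreducible_closed X Z \<longleftrightarrow> closedin X Z \<and> Z \<noteq> {} \<and>
     (\<forall>A B. closedin X A \<and> closedin X B \<and> Z = A \<union> B \<longrightarrow> Z = A \<or> Z = B)"

definition generic_point :: "'a topology \<Rightarrow> 'a set \<Rightarrow> 'a \<Rightarrow> bool" where
  "generic_point X Z x \<longleftrightarrow> x \<in> topspace X \<and> X closure_of {x} = Z"

definition sober :: "'a topology \<Rightarrow> bool" where
  "sober X \<longleftrightarrow> (\<forall>Z. irreducible_closed X Z \<longrightarrow> (\<exists>!x. generic_point X Z x))"

text \<open>Epimorphism in the category Sob, tested against all sober spaces whose
points live in the type 'c.\<close>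
definition sob_epi :: "'c itself \<Rightarrow> 'a topology \<Rightarrow> 'b topology \<Rightarrow> ('a \<Rightarrow> 'b) \<Rightarrow> bool" where
  "sob_epi _ X Y f \<longleftrightarrow>
     (\<forall>(Z::'c topology) g h. sober Z \<and> continuous_map Y Z g \<and> continuous_map Y Z h \<and>
        (\<forall>x\<in>topspace X. g (f x) = h (f x)) \<longrightarrow> (\<forall>y\<in>topspace Y. g y = h y))"

record 'a cis =
  carrier :: "'a set"
  add :: "'a \<Rightarrow> 'a \<Rightarrow> 'a"
  mul :: "'a \<Rightarrow> 'a \<Rightarrow> 'a"
  zero :: 'a
  one :: 'a
  Sum :: "'a set \<Rightarrow> 'a"

definition cis_le :: "'a cis \<Rightarrow> 'a \<Rightarrow> 'a \<Rightarrow> bool" where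
  "cis_le R a b \<longleftrightarrow> add R a b = b"

definition idealic_semiring :: "'a cis \<Rightarrow> bool" where
  "idealic_semiring R \<longleftrightarrow>
     zero R \<in> carrier R \<and> one R \<in> carrier R \<and>
     (\<forall>a\<in>carrier R. \<forall>b\<in>carrier R. add R a b \<in> carrier R \<and> mul R a b \<in> carrier R) \<and>
     (\<forall>a\<in>carrier R. \<forall>b\<in>carrier R. add R a b = add R b a \<and> mul R a b = mul R b a) \<and>
     (\<forall>a\<in>carrier R. \<forall>b\<in>carrier R. \<forall>c\<in>carrier R.
        add R (add R a b) c = add R a (add R b c) \<and> mul R (mul R a b) c = mul R a (mul R b c) \<and>
        mul R a (add R b c) = add R (mul R a b) (mul R a c)) \<and>
     (\<forall>a\<in>carrier R. add R (zero R) a = a \<and> mul R (one R) a = a \<and>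
        add R a a = a \<and> mul R (zero R) a = zero R \<and> add R (one R) a = one R)"

definition complete_idealic_semiring :: "'a cis \<Rightarrow> bool" where
  "complete_idealic_semiring R \<longleftrightarrow> idealic_semiring R \<and>
     (\<forall>S\<subseteq>carrier R. Sum R S \<in> carrier R \<and>
        (\<forall>s\<in>S. cis_le R s (Sum R S)) \<and>
        (\<forall>u\<in>carrier R. (\<forall>s\<in>S. cis_le R s u) \<longrightarrow> cis_le R (Sum R S) u) \<and>
        (\<forall>a\<in>carrier R. mul R a (Sum R S) = Sum R (mul R a ` S)))"

definition cis_hom :: "'a cis \<Rightarrow> 'b cis \<Rightarrow> ('a \<Rightarrow> 'b) \<Rightarrow> bool" where
  "cis_hom R T h \<longleftrightarrow>
     (\<forall>a\<in>carrier R. h a \<in> carrier T) \<and>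
     h (zero R) = zero T \<and> h (one R) = one T \<and>
     (\<forall>a\<in>carrier R. \<forall>b\<in>carrier R. h (mul R a b) = mul T (h a) (h b) \<and>
                                    h (add R a b) = add T (h a) (h b)) \<and>
     (\<forall>S\<subseteq>carrier R. h (Sum R S) = Sum T (h ` S))"

text \<open>Monomorphism in the category of complete idealic semirings, tested against
all complete idealic semirings whose elements live in the type 'd.\<close>
definition cis_mono :: "'d itself \<Rightarrow> 'a cis \<Rightarrow> 'b cis \<Rightarrow> ('a \<Rightarrow> 'b) \<Rightarrow> bool" where
  "cis_mono _ R T m \<longleftrightarrow>
     (\<forall>(A::'d cis) u v. complete_idealic_semiring A \<and> cis_hom A R u \<and> cis_hom A R v \<and>
        (\<forall>a\<in>carrier A. m (u a) = m (v a)) \<longrightarrow> (\<forall>a\<in>carrier A. u a = v a))"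

definition closed_sets_cis :: "'a topology \<Rightarrow> 'a set cis" where
  "closed_sets_cis X =
     \<lparr> carrier = {Z. closedin X Z},
       add = (\<lambda>Z W. Z \<inter> W),
       mul = (\<lambda>Z W. Z \<union> W),
       zero = topspace X,
       one = {},
       Sum = (\<lambda>S. topspace X \<inter> \<Inter>S) \<rparr>"

definition fsharp :: "'a topology \<Rightarrow> ('a \<Rightarrow> 'b) \<Rightarrow> 'b set \<Rightarrow> 'a set" where
  "fsharp X f W = {x \<in> topspace X. f x \<in> W}"

end

theory Submission
  imports Defs
begin

lemma closure_singleton_irred:
  assumes "z \<in> topspace Z"
  shows "irreducible_closed Z (Z closure_of {z})"
  unfolding irreducible_closed_def
proof (intro conjI allI impI)
  show "closedin Z (Z closure_of {z})" by simp
  show "Z closure_of {z} \<noteq> {}" using assms closure_of_subset[of "{z}" Z] by auto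
  fix A B assume h: "closedin Z A \<and> closedin Z B \<and> Z closure_of {z} = A \<union> B"
  have "z \<in> A \<union> B" using h assms closure_of_subset[of "{z}" Z] by auto
  then show "Z closure_of {z} = A \<or> Z closure_of {z} = B"
    using h closure_of_minimal[of "{z}" A Z] closure_of_minimal[of "{z}" B Z] by auto
qed

lemma sober_T0:
  assumes "sober Z" "a \<in> topspace Z" "b \<in> topspace Z"
    and "\<And>C. closedin Z C \<Longrightarrow> (a \<in> C \<longleftrightarrow> b \<in> C)"
  shows "a = b"
proof -
  have "b \<in> Z closure_of {a}" using assms(4)[of "Z closure_of {a}"] assms(2)
      closure_of_subset[of "{a}" Z] by auto
  hence 1: "Z closure_of {b} \<subseteq> Z closure_of {a}"
    by (simp add: closure_of_minimal)
  have "a \<in> Z closure_of {b}" using assms(4)[of "Z closure_of {b}"] assms(3)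
      closure_of_subset[of "{b}" Z] by auto
  hence 2: "Z closure_of {a} \<subseteq> Z closure_of {b}"
    by (simp add: closure_of_minimal)
  have u: "\<exists>!x. generic_point Z (Z closure_of {a}) x"
    using sober_def[THEN iffD1, OF assms(1), rule_format, OF closure_singleton_irred[OF assms(2)]] .
  then obtain x where hx: "\<forall>y. generic_point Z (Z closure_of {a}) y \<longrightarrow> y = x"
    unfolding Ex1_def by blast
  have ga: "generic_point Z (Z closure_of {a}) a" using assms(2)
    by (simp add: generic_point_def)
  have gb: "generic_point Z (Z closure_of {a}) b" using assms(3) 1 2
    by (simp add: generic_point_def)
  show ?thesis using hx ga gb by blast
qed

definition sierp :: "'c \<Rightarrow> 'c \<Rightarrow> 'c topology" where
  "sierp p q = topology (\<lambda>U. U \<in> {{}, {q}, {p,q}})"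

lemma sierp_istop: "istopology (\<lambda>U. U \<in> {{}, {q}, {p,q}})"
  unfolding istopology_def
proof (intro conjI allI impI)
  fix S T :: "'a set" assume "S \<in> {{}, {q}, {p,q}}" "T \<in> {{}, {q}, {p,q}}"
  then show "S \<inter> T \<in> {{}, {q}, {p,q}}" by auto
next
  fix K :: "'a set set" assume K: "\<forall>S\<in>K. S \<in> {{}, {q}, {p,q}}"
  show "\<Union>K \<in> {{}, {q}, {p,q}}"
  proof (cases "{p,q} \<in> K")
    case True then have "\<Union>K = {p,q}" using K by blast
    then show ?thesis by simp
  next
    case False
    show ?thesis
    proof (cases "{q} \<in> K")
      case True then have "\<Union>K = {q}" using K False by blast
      then show ?thesis by simp
    next
      case F2: False
      then have "\<Union>K = {}" using K False by blast
      then show ?thesis by simp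
    qed
  qed
qed

lemma sierp_open: "openin (sierp p q) U \<longleftrightarrow> U \<in> {{}, {q}, {p,q}}"
  unfolding sierp_def topology_inverse'[OF sierp_istop] by (rule refl)

lemma sierp_top: "topspace (sierp p q) = {p,q}"
  unfolding topspace_def sierp_open by auto

lemma sierp_sober: assumes "p \<noteq> q" shows "sober (sierp p q)"
proof -
  have clp: "closedin (sierp p q) {p}"
    unfolding closedin_def sierp_top sierp_open using assms by auto
  have cp: "sierp p q closure_of {p} = {p}" by (rule closure_of_closedin[OF clp])
  have cq: "sierp p q closure_of {q} = {p,q}"
    unfolding closure_of_def sierp_top sierp_open using assms by auto
  have cls: "C = {p} \<or> C = {p,q}" if "closedin (sierp p q) C" "C \<noteq> {}" for C
  proof -
    have "C \<subseteq> {p,q}" "{p,q} - C \<in> {{}, {q}, {p,q}}"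
      using that unfolding closedin_def sierp_top sierp_open by auto
    then show ?thesis using that(2) assms by auto
  qed
  show ?thesis unfolding sober_def
  proof (intro allI impI)
    fix C assume "irreducible_closed (sierp p q) C"
    then have "closedin (sierp p q) C" "C \<noteq> {}" unfolding irreducible_closed_def by auto
    then have C: "C = {p} \<or> C = {p,q}" using cls by blast
    have gp: "generic_point (sierp p q) C x \<longleftrightarrow> (x = p \<and> C = {p}) \<or> (x = q \<and> C = {p,q})" for x
      unfolding generic_point_def sierp_top using cp cq by auto
    show "\<exists>!x. generic_point (sierp p q) C x"
      using C assms unfolding gp by auto
  qed
qed

lemma chi_cont:
  assumes "closedin Y Z" "p \<noteq> q"
  shows "continuous_map Y (sierp p q) (\<lambda>y. if y \<in> Z then p else q)"
  unfolding continuous_map_def sierp_top sierp_open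
proof (intro conjI allI impI)
  show "(\<lambda>y. if y \<in> Z then p else q) \<in> topspace Y \<rightarrow> {p, q}" by auto
  fix U assume U: "U \<in> {{}, {q}, {p, q}}"
  have o: "openin Y (topspace Y - Z)" using assms(1) closedin_def by blast
  show "openin Y {x \<in> topspace Y. (if x \<in> Z then p else q) \<in> U}"
  proof -
    consider "U = {}" | "U = {q}" | "U = {p,q}" using U by auto
    then show ?thesis
    proof cases
      case 1 then show ?thesis by simp
    next
      case 2
      have "{x \<in> topspace Y. (if x \<in> Z then p else q) \<in> U} = topspace Y - Z"
        using 2 assms(2) by auto
      then show ?thesis using o by simp
    next
      case 3
      have "{x \<in> topspace Y. (if x \<in> Z then p else q) \<in> U} = topspace Y"
        using 3 by auto
      then show ?thesis by simp
    qed
  qed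
qed

lemma inj_dense:
  assumes "continuous_map X Y f"
  shows "inj_on (fsharp X f) {W. closedin Y W} \<longleftrightarrow>
     (\<forall>z. closedin Y z \<longrightarrow> z \<subseteq> Y closure_of (f ` topspace X \<inter> z))"
proof
  assume inj: "inj_on (fsharp X f) {W. closedin Y W}"
  show "\<forall>z. closedin Y z \<longrightarrow> z \<subseteq> Y closure_of (f ` topspace X \<inter> z)"
  proof (intro allI impI)
    fix z assume z: "closedin Y z"
    let ?z = "Y closure_of (f ` topspace X \<inter> z)"
    have sub: "?z \<subseteq> z" using z closure_of_minimal[of _ z Y] by auto
    have "fsharp X f ?z = fsharp X f z"
    proof
      show "fsharp X f ?z \<subseteq> fsharp X f z" using sub unfolding fsharp_def by auto
      show "fsharp X f z \<subseteq> fsharp X f ?z"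
      proof
        fix x assume "x \<in> fsharp X f z"
        then have x: "x \<in> topspace X" "f x \<in> z" unfolding fsharp_def by auto
        have "f x \<in> topspace Y" using assms x(1) continuous_map_image_subset_topspace[of X Y f] by blast
        have "f ` topspace X \<inter> z \<subseteq> topspace Y" using z closedin_subset by blast
        then have "f x \<in> ?z" using x closure_of_subset[of "f ` topspace X \<inter> z" Y] by auto
        then show "x \<in> fsharp X f ?z" using x unfolding fsharp_def by auto
      qed
    qed
    moreover have "?z \<in> {W. closedin Y W}" by simp
    moreover have "z \<in> {W. closedin Y W}" using z by simp
    ultimately have "?z = z" by (rule inj_onD[OF inj])
    then show "z \<subseteq> ?z" by simp
  qed
next
  assume d: "\<forall>z. closedin Y z \<longrightarrow> z \<subseteq> Y closure_of (f ` topspace X \<inter> z)"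
  show "inj_on (fsharp X f) {W. closedin Y W}"
  proof (rule inj_onI)
    fix Z W assume Z: "Z \<in> {W. closedin Y W}" and W: "W \<in> {W. closedin Y W}"
      and e: "fsharp X f Z = fsharp X f W"
    have im: "f ` topspace X \<inter> Z = f ` topspace X \<inter> W"
    proof -
      have "\<forall>x\<in>topspace X. f x \<in> Z \<longleftrightarrow> f x \<in> W" using e unfolding fsharp_def by blast
      then show ?thesis by auto
    qed
    have cZ: "closedin Y Z" and cW: "closedin Y W" using Z W by auto
    have "Z \<subseteq> Y closure_of (f ` topspace X \<inter> Z)" using d cZ by blast
    also have "\<dots> = Y closure_of (f ` topspace X \<inter> W)" using im by simp
    also have "\<dots> \<subseteq> W" by (rule closure_of_minimal[OF _ cW]) blast
    finally have 1: "Z \<subseteq> W" .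
    have "W \<subseteq> Y closure_of (f ` topspace X \<inter> W)" using d cW by blast
    also have "\<dots> = Y closure_of (f ` topspace X \<inter> Z)" using im by simp
    also have "\<dots> \<subseteq> Z" by (rule closure_of_minimal[OF _ cZ]) blast
    finally have 2: "W \<subseteq> Z" .
    from 1 2 show "Z = W" by (rule subset_antisym)
  qed
qed


definition chain3 :: "'d \<Rightarrow> 'd \<Rightarrow> 'd \<Rightarrow> 'd cis" where
  "chain3 p q r = \<lparr> carrier = {p,q,r},
     add = (\<lambda>a b. if a = r \<or> b = r then r else if a = q \<or> b = q then q else p),
     mul = (\<lambda>a b. if a = p \<or> b = p then p else if a = q \<or> b = q then q else r),
     zero = p, one = r,
     Sum = (\<lambda>S. if r \<in> S then r else if q \<in> S then q else p) \<rparr>"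

lemma chain3_sel:
  "carrier (chain3 p q r) = {p,q,r}"
  "add (chain3 p q r) = (\<lambda>a b. if a = r \<or> b = r then r else if a = q \<or> b = q then q else p)"
  "mul (chain3 p q r) = (\<lambda>a b. if a = p \<or> b = p then p else if a = q \<or> b = q then q else r)"
  "zero (chain3 p q r) = p" "one (chain3 p q r) = r"
  "Sum (chain3 p q r) = (\<lambda>S. if r \<in> S then r else if q \<in> S then q else p)"
  unfolding chain3_def by simp_all

lemma chain3_complete:
  assumes "p \<noteq> q" "p \<noteq> r" "q \<noteq> r"
  shows "complete_idealic_semiring (chain3 p q r)"
  unfolding complete_idealic_semiring_def
proof (intro conjI allI impI)
  have d: "p \<noteq> q" "p \<noteq> r" "q \<noteq> r" "q \<noteq> p" "r \<noteq> p" "r \<noteq> q" using assms by auto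
  show "idealic_semiring (chain3 p q r)"
    unfolding idealic_semiring_def chain3_sel using d by simp
  fix S assume S: "S \<subseteq> carrier (chain3 p q r)"
  then have S': "S \<subseteq> {p,q,r}" by (simp add: chain3_sel)
  show "Sum (chain3 p q r) S \<in> carrier (chain3 p q r)" unfolding chain3_sel by simp
  show "\<forall>s\<in>S. cis_le (chain3 p q r) s (Sum (chain3 p q r) S)"
  proof
    fix s assume s: "s \<in> S"
    then have "s = p \<or> s = q \<or> s = r" using S' by blast
    then show "cis_le (chain3 p q r) s (Sum (chain3 p q r) S)"
      unfolding cis_le_def chain3_sel using d s by (elim disjE) simp_all
  qed
  show "\<forall>u\<in>carrier (chain3 p q r). (\<forall>s\<in>S. cis_le (chain3 p q r) s u) \<longrightarrow>
          cis_le (chain3 p q r) (Sum (chain3 p q r) S) u"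
  proof (intro ballI impI)
    fix u assume u: "u \<in> carrier (chain3 p q r)" and h: "\<forall>s\<in>S. cis_le (chain3 p q r) s u"
    have hq: "q \<in> S \<Longrightarrow> u \<noteq> p" using h d unfolding cis_le_def chain3_sel by force
    have hr: "r \<in> S \<Longrightarrow> u = r" using h d u unfolding cis_le_def chain3_sel by force
    have "u = p \<or> u = q \<or> u = r" using u by (simp add: chain3_sel)
    then show "cis_le (chain3 p q r) (Sum (chain3 p q r) S) u"
      unfolding cis_le_def chain3_sel using d hq hr by (elim disjE) auto
  qed
  show "\<forall>a\<in>carrier (chain3 p q r). mul (chain3 p q r) a (Sum (chain3 p q r) S) =
          Sum (chain3 p q r) (mul (chain3 p q r) a ` S)"
  proof
    fix a assume "a \<in> carrier (chain3 p q r)"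
    then have "a = p \<or> a = q \<or> a = r" by (simp add: chain3_sel)
    then show "mul (chain3 p q r) a (Sum (chain3 p q r) S) =
          Sum (chain3 p q r) (mul (chain3 p q r) a ` S)"
    proof (elim disjE)
      assume a: "a = p"
      have "(\<lambda>b. if a = p \<or> b = p then p else if a = q \<or> b = q then q else r) ` S \<subseteq> {p}"
        using a by auto
      then have "r \<notin> (\<lambda>b. if a = p \<or> b = p then p else if a = q \<or> b = q then q else r) ` S"
         "q \<notin> (\<lambda>b. if a = p \<or> b = p then p else if a = q \<or> b = q then q else r) ` S"
        using d by auto
      then show ?thesis unfolding chain3_sel using a by simp
    next
      assume a: "a = r"
      have "(\<lambda>b. if a = p \<or> b = p then p else if a = q \<or> b = q then q else r) ` S = S"
      proof (rule image_cong[where g = id, simplified])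
        show "S = S" ..
        fix b assume "b \<in> S" then have "b = p \<or> b = q \<or> b = r" using S' by blast
        then show "(if a = p \<or> b = p then p else if a = q \<or> b = q then q else r) = b"
          using a d by auto
      qed
      then show ?thesis unfolding chain3_sel using a d by simp
    next
      assume a: "a = q"
      let ?g = "(\<lambda>b. if a = p \<or> b = p then p else if a = q \<or> b = q then q else r)"
      have g: "?g b = (if b = p then p else q)" for b using a d by auto
      have n: "r \<notin> ?g ` S" unfolding g using d by auto
      have qq: "q \<in> ?g ` S \<longleftrightarrow> (q \<in> S \<or> r \<in> S)"
      proof
        assume "q \<in> ?g ` S" then obtain b where "b \<in> S" "q = ?g b" by blast
        then show "q \<in> S \<or> r \<in> S" unfolding g using S' d by (auto split: if_splits)
      next
        assume "q \<in> S \<or> r \<in> S"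
        then show "q \<in> ?g ` S" unfolding g using d by (auto simp: image_iff)
      qed
      show ?thesis unfolding chain3_sel using a d n qq by simp
    qed
  qed
qed

definition kmap :: "'b topology \<Rightarrow> 'd \<Rightarrow> 'd \<Rightarrow> 'b set \<Rightarrow> 'd \<Rightarrow> 'b set" where
  "kmap Y p q Z x = (if x = p then topspace Y else if x = q then Z else {})"

lemma kmap_hom:
  assumes "p \<noteq> q" "p \<noteq> r" "q \<noteq> r" "closedin Y Z"
  shows "cis_hom (chain3 p q r) (closed_sets_cis Y) (kmap Y p q Z)"
  unfolding cis_hom_def
proof (intro conjI allI impI)
  have d: "p \<noteq> q" "p \<noteq> r" "q \<noteq> r" "q \<noteq> p" "r \<noteq> p" "r \<noteq> q" using assms by auto
  have Zs: "Z \<subseteq> topspace Y" using assms(4) closedin_subset by blast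
  have ZZ: "Z \<inter> topspace Y = Z" "topspace Y \<inter> Z = Z" "Z \<union> topspace Y = topspace Y"
    "topspace Y \<union> Z = topspace Y" using Zs by auto
  show "\<forall>a\<in>carrier (chain3 p q r). kmap Y p q Z a \<in> carrier (closed_sets_cis Y)"
    using assms d unfolding chain3_sel closed_sets_cis_def kmap_def by simp
  show "kmap Y p q Z (zero (chain3 p q r)) = zero (closed_sets_cis Y)"
    unfolding chain3_sel closed_sets_cis_def kmap_def by simp
  show "kmap Y p q Z (one (chain3 p q r)) = one (closed_sets_cis Y)"
    using d unfolding chain3_sel closed_sets_cis_def kmap_def by simp
  show "\<forall>a\<in>carrier (chain3 p q r). \<forall>b\<in>carrier (chain3 p q r).
       kmap Y p q Z (mul (chain3 p q r) a b) = mul (closed_sets_cis Y) (kmap Y p q Z a) (kmap Y p q Z b) \<and>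
       kmap Y p q Z (add (chain3 p q r) a b) = add (closed_sets_cis Y) (kmap Y p q Z a) (kmap Y p q Z b)"
    using d ZZ unfolding chain3_sel closed_sets_cis_def kmap_def by simp
  fix S assume S: "S \<subseteq> carrier (chain3 p q r)"
  then have S': "S \<subseteq> {p,q,r}" by (simp add: chain3_sel)
  have sumY: "Sum (closed_sets_cis Y) T = topspace Y \<inter> \<Inter>T" for T
    unfolding closed_sets_cis_def by simp
  show "kmap Y p q Z (Sum (chain3 p q r) S) = Sum (closed_sets_cis Y) (kmap Y p q Z ` S)"
    unfolding sumY
  proof (cases "r \<in> S")
    case True
    then have "{} \<in> kmap Y p q Z ` S" using d unfolding kmap_def by (auto simp: image_iff)
    then have "topspace Y \<inter> \<Inter>(kmap Y p q Z ` S) = {}" by blast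
    then show "kmap Y p q Z (Sum (chain3 p q r) S) = topspace Y \<inter> \<Inter>(kmap Y p q Z ` S)"
      using True d unfolding chain3_sel kmap_def by simp
  next
    case F1: False
    then have sub: "S \<subseteq> {p,q}" using S' by blast
    have kk: "kmap Y p q Z ` S \<subseteq> {topspace Y, Z}"
      using sub unfolding kmap_def by auto
    show "kmap Y p q Z (Sum (chain3 p q r) S) = topspace Y \<inter> \<Inter>(kmap Y p q Z ` S)"
    proof (cases "q \<in> S")
      case True
      then have "Z \<in> kmap Y p q Z ` S" using d unfolding kmap_def by (auto simp: image_iff)
      then have "topspace Y \<inter> \<Inter>(kmap Y p q Z ` S) = Z" using kk Zs by blast
      then show ?thesis using True F1 d unfolding chain3_sel kmap_def by simp
    next
      case False
      then have "kmap Y p q Z ` S \<subseteq> {topspace Y}" using sub d unfolding kmap_def by auto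
      then have "topspace Y \<inter> \<Inter>(kmap Y p q Z ` S) = topspace Y" by blast
      then show ?thesis using False F1 d unfolding chain3_sel kmap_def by simp
    qed
  qed
qed

lemma inj_mono:
  assumes "\<exists>p q r :: 'd. p \<noteq> q \<and> p \<noteq> r \<and> q \<noteq> r"
  shows "inj_on (fsharp X f) {W. closedin Y W} \<longleftrightarrow>
         cis_mono TYPE('d) (closed_sets_cis Y) (closed_sets_cis X) (fsharp X f)"
proof
  assume inj: "inj_on (fsharp X f) {W. closedin Y W}"
  show "cis_mono TYPE('d) (closed_sets_cis Y) (closed_sets_cis X) (fsharp X f)"
    unfolding cis_mono_def
  proof (intro allI impI ballI)
    fix A :: "'d cis" and u v a
    assume h: "complete_idealic_semiring A \<and> cis_hom A (closed_sets_cis Y) u \<and>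
        cis_hom A (closed_sets_cis Y) v \<and> (\<forall>a\<in>carrier A. fsharp X f (u a) = fsharp X f (v a))"
      and a: "a \<in> carrier A"
    have "u a \<in> {W. closedin Y W}" "v a \<in> {W. closedin Y W}"
      using h a unfolding cis_hom_def closed_sets_cis_def by auto
    moreover have "fsharp X f (u a) = fsharp X f (v a)" using h a by blast
    ultimately show "u a = v a" using inj_onD[OF inj] by blast
  qed
next
  assume m: "cis_mono TYPE('d) (closed_sets_cis Y) (closed_sets_cis X) (fsharp X f)"
  obtain p q r :: 'd where d: "p \<noteq> q" "p \<noteq> r" "q \<noteq> r" using assms by blast
  have key: "Z \<inter> W = Z" if Z: "closedin Y Z" and W: "closedin Y W"
     and e: "fsharp X f Z = fsharp X f W" for Z W
  proof -
    have ZW: "closedin Y (Z \<inter> W)" using Z W by auto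
    have e2: "fsharp X f (Z \<inter> W) = fsharp X f Z" using e unfolding fsharp_def by blast
    have pr: "complete_idealic_semiring (chain3 p q r) \<and>
        cis_hom (chain3 p q r) (closed_sets_cis Y) (kmap Y p q (Z \<inter> W)) \<and>
        cis_hom (chain3 p q r) (closed_sets_cis Y) (kmap Y p q Z) \<and>
        (\<forall>a\<in>carrier (chain3 p q r). fsharp X f (kmap Y p q (Z \<inter> W) a) = fsharp X f (kmap Y p q Z a))"
    proof (intro conjI)
      show "\<forall>a\<in>carrier (chain3 p q r). fsharp X f (kmap Y p q (Z \<inter> W) a) = fsharp X f (kmap Y p q Z a)"
        using e2 unfolding kmap_def by simp
    qed (rule chain3_complete[OF d] kmap_hom[OF d ZW] kmap_hom[OF d Z])+
    have qc: "q \<in> carrier (chain3 p q r)" unfolding chain3_def by simp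
    have "kmap Y p q (Z \<inter> W) q = kmap Y p q Z q"
      using m[unfolded cis_mono_def, rule_format, OF pr qc] .
    then show ?thesis unfolding chain3_def kmap_def using d by auto
  qed
  show "inj_on (fsharp X f) {W. closedin Y W}"
  proof (rule inj_onI)
    fix Z W assume "Z \<in> {W. closedin Y W}" "W \<in> {W. closedin Y W}"
      "fsharp X f Z = fsharp X f W"
    then show "Z = W" using key[of Z W] key[of W Z] by auto
  qed
qed

lemma epi_inj:
  assumes "continuous_map X Y f" and "\<exists>p q :: 'c. p \<noteq> q"
  shows "sob_epi TYPE('c) X Y f \<longleftrightarrow> inj_on (fsharp X f) {W. closedin Y W}"
proof
  assume epi: "sob_epi TYPE('c) X Y f"
  obtain p q :: 'c where pq: "p \<noteq> q" using assms(2) by blast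
  show "inj_on (fsharp X f) {W. closedin Y W}"
  proof (rule inj_onI)
    fix Z W assume Z: "Z \<in> {W. closedin Y W}" and W: "W \<in> {W. closedin Y W}"
      and e: "fsharp X f Z = fsharp X f W"
    have agree: "\<forall>x\<in>topspace X. (\<lambda>y. if y \<in> Z then p else q) (f x) = (\<lambda>y. if y \<in> W then p else q) (f x)"
      using e unfolding fsharp_def by auto
    have pr: "sober (sierp p q) \<and> continuous_map Y (sierp p q) (\<lambda>y. if y \<in> Z then p else q) \<and>
       continuous_map Y (sierp p q) (\<lambda>y. if y \<in> W then p else q) \<and>
       (\<forall>x\<in>topspace X. (\<lambda>y. if y \<in> Z then p else q) (f x) = (\<lambda>y. if y \<in> W then p else q) (f x))"
    proof (intro conjI)
      show "sober (sierp p q)" by (rule sierp_sober[OF pq])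
      show "continuous_map Y (sierp p q) (\<lambda>y. if y \<in> Z then p else q)"
        using chi_cont[of Y Z p q] Z pq by simp
      show "continuous_map Y (sierp p q) (\<lambda>y. if y \<in> W then p else q)"
        using chi_cont[of Y W p q] W pq by simp
    qed (rule agree)
    have eq: "(\<lambda>y. if y \<in> Z then p else q) y = (\<lambda>y. if y \<in> W then p else q) y"
      if "y \<in> topspace Y" for y
      using epi[unfolded sob_epi_def, rule_format, OF pr that] .
    have "\<forall>y\<in>topspace Y. y \<in> Z \<longleftrightarrow> y \<in> W"
    proof
      fix y assume "y \<in> topspace Y"
      from eq[OF this] pq show "y \<in> Z \<longleftrightarrow> y \<in> W" by (auto split: if_splits)
    qed
    moreover have "Z \<subseteq> topspace Y" "W \<subseteq> topspace Y" using Z W closedin_subset by auto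
    ultimately show "Z = W" by blast
  qed
next
  assume inj: "inj_on (fsharp X f) {W. closedin Y W}"
  show "sob_epi TYPE('c) X Y f" unfolding sob_epi_def
  proof (intro allI impI ballI)
    fix Z :: "'c topology" and g h y
    assume H: "sober Z \<and> continuous_map Y Z g \<and> continuous_map Y Z h \<and>
        (\<forall>x\<in>topspace X. g (f x) = h (f x))" and y: "y \<in> topspace Y"
    show "g y = h y"
    proof (rule sober_T0[of Z])
      show "sober Z" using H by blast
      show "g y \<in> topspace Z" "h y \<in> topspace Z"
        using H y continuous_map_image_subset_topspace[of Y Z g] continuous_map_image_subset_topspace[of Y Z h]
        by blast+
      fix C assume C: "closedin Z C"
      have c1: "closedin Y {y \<in> topspace Y. g y \<in> C}"
        using H C closedin_continuous_map_preimage by blast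
      have c2: "closedin Y {y \<in> topspace Y. h y \<in> C}"
        using H C closedin_continuous_map_preimage by blast
      have fX: "\<forall>x\<in>topspace X. f x \<in> topspace Y" using assms(1) continuous_map_image_subset_topspace[of X Y f] by blast
      have "fsharp X f {y \<in> topspace Y. g y \<in> C} = fsharp X f {y \<in> topspace Y. h y \<in> C}"
        using conjunct2[OF conjunct2[OF conjunct2[OF H]]] fX unfolding fsharp_def by auto
      then have "{y \<in> topspace Y. g y \<in> C} = {y \<in> topspace Y. h y \<in> C}"
        using inj_onD[OF inj _ _ _] c1 c2 by blast
      then show "g y \<in> C \<longleftrightarrow> h y \<in> C" using y by blast
    qed
  qed
qed

theorem proposition1p6:
  fixes X :: "'a topology" and Y :: "'b topology" and f :: "'a \<Rightarrow> 'b"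
  assumes "sober X" and "sober Y" and "continuous_map X Y f"
    and "\<exists>p q :: 'c. p \<noteq> q"
    and "\<exists>p q r :: 'd. p \<noteq> q \<and> p \<noteq> r \<and> q \<noteq> r"
  shows "(sob_epi TYPE('c) X Y f \<longleftrightarrow> inj_on (fsharp X f) {W. closedin Y W})
       \<and> (inj_on (fsharp X f) {W. closedin Y W} \<longleftrightarrow>
            cis_mono TYPE('d) (closed_sets_cis Y) (closed_sets_cis X) (fsharp X f))
       \<and> (cis_mono TYPE('d) (closed_sets_cis Y) (closed_sets_cis X) (fsharp X f) \<longleftrightarrow>
            (\<forall>z. closedin Y z \<longrightarrow> z \<subseteq> Y closure_of (f ` topspace X \<inter> z)))"
proof (intro conjI)
  show "sob_epi TYPE('c) X Y f \<longleftrightarrow> inj_on (fsharp X f) {W. closedin Y W}"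
    by (rule epi_inj[OF assms(3,4)])
  show "inj_on (fsharp X f) {W. closedin Y W} \<longleftrightarrow>
            cis_mono TYPE('d) (closed_sets_cis Y) (closed_sets_cis X) (fsharp X f)"
    by (rule inj_mono[OF assms(5)])
  show "cis_mono TYPE('d) (closed_sets_cis Y) (closed_sets_cis X) (fsharp X f) \<longleftrightarrow>
            (\<forall>z. closedin Y z \<longrightarrow> z \<subseteq> Y closure_of (f ` topspace X \<inter> z))"
    by (rule trans[OF inj_mono[OF assms(5), symmetric] inj_dense[OF assms(3)]])
qed

end
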